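(* Let $p>5$ be a prime and $A\subseteq\mathbb{F}_p$ satisfy $A-A\doteq\mathcal{R}_p$. Then the multiplier subgroup $M_A$ has odd order; equivalently, $-1\notin M_A$.
   Context: $\mathcal{R}_p$ is the set of nonzero quadratic residues modulo $p$. $A-A\doteq S$ means: every element of $S$ has exactly one representation as $a'-a''$ with $a',a''\in A$, and every difference $a'-a''$ with $a'\ne a''$ in $A$ lies in $S$. An element $\mu\in\mathbb{F}_p^\times$ is a multiplier of $A$ if $\mu A=A+g$ for some $g\in\mathbb{F}_p$, where $\mu A=\{\mu a\colon a\in A\}$; the multipliers form a subgroup $M_A\le\mathbb{F}_p^\times$. *)

theory Defs
  imports "HOL-Number_Theory.Number_Theory"
begin

text \<open>F_p is represented by the residues {0..p-1} (as integers), arithmetic mod p.\<close>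

definition Fp :: "int \<Rightarrow> int set" where
  "Fp p = {0..p-1}"

definition QR :: "int \<Rightarrow> int set" where
  "QR p = {x \<in> Fp p. x \<noteq> 0 \<and> QuadRes p x}"

definition diff_exact :: "int \<Rightarrow> int set \<Rightarrow> int set \<Rightarrow> bool" where
  "diff_exact p A S \<longleftrightarrow>
     (\<forall>s\<in>S. \<exists>!ab. ab \<in> A \<times> A \<and> (fst ab - snd ab) mod p = s) \<and>
     (\<forall>a1\<in>A. \<forall>a2\<in>A. a1 \<noteq> a2 \<longrightarrow> (a1 - a2) mod p \<in> S)"

definition multipliers :: "int \<Rightarrow> int set \<Rightarrow> int set" where
  "multipliers p A = {\<mu> \<in> Fp p. \<mu> \<noteq> 0 \<and>
      (\<exists>g\<in>Fp p. (\<lambda>a. (\<mu> * a) mod p) ` A = (\<lambda>a. (a + g) mod p) ` A)}"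

end

theory Submission
  imports Defs
begin

lemma even_card_inv:
  "finite S \<Longrightarrow> (\<forall>x\<in>S. f x \<in> S \<and> f (f x) = x \<and> f x \<noteq> x) \<Longrightarrow> even (card S)"
proof (induction "card S" arbitrary: S rule: less_induct)
  case less
  show ?case
  proof (cases "S = {}")
    case True then show ?thesis by simp
  next
    case False
    then obtain x where x: "x \<in> S" by blast
    define S' where "S' = S - {x, f x}"
    have fx: "f x \<in> S" "f x \<noteq> x" using less.prems x by auto
    have inv': "\<forall>y\<in>S'. f y \<in> S' \<and> f (f y) = y \<and> f y \<noteq> y"
      using less.prems x unfolding S'_def by (metis DiffE DiffI insertCI insertE singletonD)
    have cS: "card S = card S' + 2"
    proof -
      have sub: "{x, f x} \<subseteq> S" using fx x by auto
      have c2: "card {x, f x} = 2" using fx by simp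
      have "card {x, f x} \<le> card S" using card_mono[OF less.prems(1) sub] .
      moreover have "card S' = card S - card {x, f x}"
        unfolding S'_def using card_Diff_subset[OF _ sub] by auto
      ultimately show ?thesis using c2 by simp
    qed
    have "even (card S')"
      using less.hyps[of S'] inv' less.prems(1) cS unfolding S'_def by auto
    then show ?thesis using cS by simp
  qed
qed

lemma Fp_mod: "x \<in> Fp p \<Longrightarrow> x mod p = x"
  unfolding Fp_def by auto

lemma Fp_eq: "x \<in> Fp p \<Longrightarrow> y \<in> Fp p \<Longrightarrow> p dvd (x - y) \<Longrightarrow> x = y"
  by (metis Fp_mod mod_eq_dvd_iff)

lemma inv_ex:
  assumes "prime p" "\<mu> \<in> Fp p" "\<mu> \<noteq> 0"
  shows "\<exists>\<nu>\<in>Fp p. (\<mu>*\<nu>) mod p = 1"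
proof -
  have p1: "p > 1" using assms(1) prime_gt_1_int by blast
  have "\<not> p dvd \<mu>" using assms p1 unfolding Fp_def
    by (metis atLeastAtMost_iff zdvd_imp_le dvd_imp_le_int less_le not_le zle_diff1_eq)
  then have "coprime \<mu> p" using assms(1) prime_imp_coprime coprime_commute by blast
  then obtain x where "[\<mu> * x = 1] (mod p)" using cong_solve_coprime_int by blast
  then have "(\<mu> * (x mod p)) mod p = 1" using p1 unfolding cong_def
    by (simp add: mod_mult_right_eq)
  moreover have "x mod p \<in> Fp p" using p1 unfolding Fp_def by simp
  ultimately show ?thesis by blast
qed

lemma inv_uniq:
  assumes "prime p" "\<mu> \<in> Fp p" "\<mu> \<noteq> 0" "a \<in> Fp p" "b \<in> Fp p"
    "(\<mu>*a) mod p = 1" "(\<mu>*b) mod p = 1"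
  shows "a = b"
proof -
  have p1: "p > 1" using assms(1) prime_gt_1_int by blast
  have "\<not> p dvd \<mu>" using assms p1 unfolding Fp_def
    by (metis atLeastAtMost_iff zdvd_imp_le dvd_imp_le_int less_le not_le zle_diff1_eq)
  moreover have "p dvd \<mu> * (a - b)"
    using assms(6,7) mod_eq_dvd_iff by (metis right_diff_distrib)
  ultimately have "p dvd (a - b)" using assms(1) prime_dvd_mult_iff by blast
  then show ?thesis using Fp_eq assms by blast
qed

lemma three_elems:
  assumes "prime p" "p > 5" "A \<subseteq> Fp p" "diff_exact p A (QR p)"
  shows "\<exists>a\<in>A. \<exists>b\<in>A. \<exists>c\<in>A. a \<noteq> b \<and> a \<noteq> c \<and> b \<noteq> c"
proof (rule ccontr)
  assume h0: "\<not> ?thesis"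
  have h: "\<And>a b c. a \<in> A \<Longrightarrow> b \<in> A \<Longrightarrow> c \<in> A \<Longrightarrow> a = b \<or> a = c \<or> b = c"
    using h0 by blast
  have ex: "\<And>s. s \<in> QR p \<Longrightarrow> \<exists>x\<in>A. \<exists>y\<in>A. (x - y) mod p = s"
  proof -
    fix s assume "s \<in> QR p"
    then have "\<exists>!ab. ab \<in> A \<times> A \<and> (fst ab - snd ab) mod p = s"
      using assms(4) unfolding diff_exact_def by blast
    then obtain ab where "ab \<in> A \<times> A \<and> (fst ab - snd ab) mod p = s" by blast
    then show "\<exists>x\<in>A. \<exists>y\<in>A. (x - y) mod p = s" by (cases ab) auto
  qed
  have n9: "\<not> p dvd 9"
  proof
    assume "p dvd 9"
    then have "p dvd 3^2" by simp
    then have "p dvd 3" using assms(1) prime_dvd_power by blast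
    then have "p \<le> 3" using zdvd_imp_le by simp
    then show False using assms(2) by simp
  qed
  have n8: "\<not> p dvd 8"
  proof
    assume "p dvd 8"
    then have "p dvd 2^3" by simp
    then have "p dvd 2" using assms(1) prime_dvd_power by blast
    then have "p \<le> 2" using zdvd_imp_le by simp
    then show False using assms(2) by simp
  qed
  have n5: "\<not> p dvd 5" using assms(2) zdvd_imp_le[of p 5] by linarith
  have q1: "1 \<in> QR p" using assms(2) unfolding QR_def Fp_def QuadRes_def
    by (auto intro!: exI[of _ 1])
  have q4: "4 \<in> QR p" using assms(2) unfolding QR_def Fp_def QuadRes_def
    by (auto intro!: exI[of _ 2] simp: cong_def)
  have q9: "9 mod p \<in> QR p" using assms(2) n9 unfolding QR_def Fp_def QuadRes_def
    by (auto intro!: exI[of _ 3] simp: cong_def dvd_eq_mod_eq_0)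
  obtain x1 y1 where xy1: "x1 \<in> A" "y1 \<in> A" "(x1 - y1) mod p = 1" using ex[OF q1] by blast
  obtain x2 y2 where xy2: "x2 \<in> A" "y2 \<in> A" "(x2 - y2) mod p = 4" using ex[OF q4] by blast
  obtain x3 y3 where xy3: "x3 \<in> A" "y3 \<in> A" "(x3 - y3) mod p = 9 mod p" using ex[OF q9] by blast
  have d1: "x1 \<noteq> y1" using xy1 by auto
  have d2: "x2 \<noteq> y2" using xy2 by auto
  have d3: "x3 \<noteq> y3" using xy3 n9 by (auto simp: dvd_eq_mod_eq_0)
  have "x2 = x1 \<or> x2 = y1" using h[OF xy2(1) xy1(1) xy1(2)] d1 by blast
  moreover have "y2 = x1 \<or> y2 = y1" using h[OF xy2(2) xy1(1) xy1(2)] d1 by blast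
  moreover have "x3 = x1 \<or> x3 = y1" using h[OF xy3(1) xy1(1) xy1(2)] d1 by blast
  moreover have "y3 = x1 \<or> y3 = y1" using h[OF xy3(2) xy1(1) xy1(2)] d1 by blast
  ultimately have c2: "x2 = y1 \<and> y2 = x1" and c3: "x3 = y1 \<and> y3 = x1 \<or> (x3 = x1 \<and> y3 = y1)"
    using d2 d3 xy1(3) xy2(3) by auto
  have "(y1 - x1) mod p = 4" using c2 xy2 by simp
  then have "9 mod p = 4 \<or> 9 mod p = 1" using c3 xy3 xy1 by auto
  moreover have "4 mod p = 4" "1 mod p = 1" using assms(2) by auto
  ultimately have "p dvd 9 - 4 \<or> p dvd 9 - 1" by (metis mod_eq_dvd_iff)
  then show False using n5 n8 by auto
qed

lemma neg1_not:
  assumes "prime p" "p > 5" "A \<subseteq> Fp p" "diff_exact p A (QR p)"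
  shows "(p - 1) \<notin> multipliers p A"
proof
  assume "(p - 1) \<in> multipliers p A"
  then obtain g where g: "g \<in> Fp p"
    and eq: "(\<lambda>a. ((p - 1) * a) mod p) ` A = (\<lambda>a. (a + g) mod p) ` A"
    unfolding multipliers_def by blast
  have img: "\<exists>a'\<in>A. p dvd (a' + g + a)" if "a \<in> A" for a
  proof -
    have "((p - 1) * a) mod p \<in> (\<lambda>a. (a + g) mod p) ` A" using eq that by blast
    then obtain a' where a': "a' \<in> A" "((p - 1) * a) mod p = (a' + g) mod p" by auto
    then have "p dvd ((p - 1) * a) - (a' + g)" using mod_eq_dvd_iff by blast
    moreover have "(a' + g + a) = p * a - (((p - 1) * a) - (a' + g))" by (simp add: algebra_simps)
    ultimately have "p dvd (a' + g + a)" by (metis dvd_diff dvd_triv_left)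
    then show ?thesis using a' by blast
  qed
  have pair: "p dvd (a + b + g)" if ab: "a \<in> A" "b \<in> A" "a \<noteq> b" for a b
  proof -
    obtain a' where a': "a' \<in> A" "p dvd (a' + g + a)" using img ab by blast
    obtain b' where b': "b' \<in> A" "p dvd (b' + g + b)" using img ab by blast
    define s where "s = (a - b) mod p"
    have sQ: "s \<in> QR p" using assms(4) ab unfolding diff_exact_def s_def by blast
    have "p dvd ((b' - a') - (a - b))"
    proof -
      have "(b' - a') - (a - b) = (b' + g + b) - (a' + g + a)" by simp
      then show ?thesis using a' b' by (metis dvd_diff)
    qed
    then have s2: "(b' - a') mod p = s" unfolding s_def using mod_eq_dvd_iff by blast
    have "\<exists>!ab. ab \<in> A \<times> A \<and> (fst ab - snd ab) mod p = s"
      using assms(4) sQ unfolding diff_exact_def by blast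
    moreover have "(a, b) \<in> A \<times> A \<and> (fst (a, b) - snd (a, b)) mod p = s" using ab s_def by simp
    moreover have "(b', a') \<in> A \<times> A \<and> (fst (b', a') - snd (b', a')) mod p = s" using a' b' s2 by simp
    ultimately have "(a, b) = (b', a')" by blast
    then show ?thesis using b' by (simp add: add.commute add.left_commute)
  qed
  obtain a b c where abc: "a \<in> A" "b \<in> A" "c \<in> A" "a \<noteq> b" "a \<noteq> c" "b \<noteq> c"
    using three_elems[OF assms] by blast
  have "p dvd (a + b + g) - (a + c + g)" using pair abc by (meson dvd_diff)
  then have "p dvd b - c" by simp
  then have "b = c" using Fp_eq abc assms(3) by blast
  then show False using abc by blast
qed

definition finv :: "int \<Rightarrow> int \<Rightarrow> int" where
  "finv p \<mu> = (SOME \<nu>. \<nu> \<in> Fp p \<and> (\<mu>*\<nu>) mod p = 1)"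

lemma finv:
  assumes "prime p" "\<mu> \<in> Fp p" "\<mu> \<noteq> 0"
  shows "finv p \<mu> \<in> Fp p" "(\<mu> * finv p \<mu>) mod p = 1" "finv p \<mu> \<noteq> 0"
    "finv p (finv p \<mu>) = \<mu>"
proof -
  show 1: "finv p \<mu> \<in> Fp p" "(\<mu> * finv p \<mu>) mod p = 1"
    using someI_ex[OF inv_ex[OF assms, unfolded Bex_def]] unfolding finv_def by auto
  then show 3: "finv p \<mu> \<noteq> 0" by auto
  have "finv p (finv p \<mu>) \<in> Fp p" "(finv p \<mu> * finv p (finv p \<mu>)) mod p = 1"
    using someI_ex[OF inv_ex[OF assms(1) 1(1) 3, unfolded Bex_def]] unfolding finv_def[of p "finv p \<mu>"] by auto
  moreover have "(finv p \<mu> * \<mu>) mod p = 1" using 1 by (simp add: mult.commute)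
  ultimately show "finv p (finv p \<mu>) = \<mu>" using inv_uniq[OF assms(1) 1(1) 3] assms(2) by blast
qed

lemma finv_mult:
  assumes "prime p" "\<mu> \<in> multipliers p A"
  shows "finv p \<mu> \<in> multipliers p A"
proof -
  have p1: "p > 1" using assms(1) prime_gt_1_int by blast
  obtain g where mu: "\<mu> \<in> Fp p" "\<mu> \<noteq> 0" and g: "g \<in> Fp p"
    and eq: "(\<lambda>a. (\<mu> * a) mod p) ` A = (\<lambda>a. (a + g) mod p) ` A"
    using assms(2) unfolding multipliers_def by blast
  define \<nu> where "\<nu> = finv p \<mu>"
  have nu: "\<nu> \<in> Fp p" "\<nu> \<noteq> 0" "(\<mu> * \<nu>) mod p = 1" using finv[OF assms(1) mu] \<nu>_def by auto
  have "(\<mu> * \<nu>) mod p = 1 mod p" using nu(3) p1 by simp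
  then have mn: "p dvd \<mu> * \<nu> - 1" using mod_eq_dvd_iff by blast
  define g' where "g' = (- \<nu> * g) mod p"
  have g': "g' \<in> Fp p" using p1 unfolding g'_def Fp_def by simp
  have key: "(\<nu> * x) mod p = (y + g') mod p" if "(\<mu> * y) mod p = (x + g) mod p" for x y
  proof -
    have d: "p dvd \<mu> * y - (x + g)" using that mod_eq_dvd_iff by blast
    have "\<nu> * x - (y + - \<nu> * g) = y * (\<mu> * \<nu> - 1) - \<nu> * (\<mu> * y - (x + g))"
      by (simp add: algebra_simps)
    moreover have "p dvd y * (\<mu> * \<nu> - 1)" using mn by (rule dvd_mult)
    moreover have "p dvd \<nu> * (\<mu> * y - (x + g))" using d by (rule dvd_mult)
    ultimately have "p dvd \<nu> * x - (y + - \<nu> * g)" by (metis dvd_diff)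
    then have "(\<nu> * x) mod p = (y + - \<nu> * g) mod p" using mod_eq_dvd_iff by blast
    then show ?thesis unfolding g'_def by (simp add: mod_add_right_eq)
  qed
  have "(\<lambda>a. (\<nu> * a) mod p) ` A = (\<lambda>a. (a + g') mod p) ` A"
  proof
    show "(\<lambda>a. (\<nu> * a) mod p) ` A \<subseteq> (\<lambda>a. (a + g') mod p) ` A"
    proof
      fix z assume "z \<in> (\<lambda>a. (\<nu> * a) mod p) ` A"
      then obtain x where x: "x \<in> A" "z = (\<nu> * x) mod p" by blast
      then have "(x + g) mod p \<in> (\<lambda>a. (\<mu> * a) mod p) ` A" using eq by blast
      then obtain y where y: "y \<in> A" "(\<mu> * y) mod p = (x + g) mod p" by auto
      have "z = (y + g') mod p" using key[OF y(2)] x(2) by simp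
      then show "z \<in> (\<lambda>a. (a + g') mod p) ` A" using y(1) by blast
    qed
    show "(\<lambda>a. (a + g') mod p) ` A \<subseteq> (\<lambda>a. (\<nu> * a) mod p) ` A"
    proof
      fix z assume "z \<in> (\<lambda>a. (a + g') mod p) ` A"
      then obtain y where y: "y \<in> A" "z = (y + g') mod p" by blast
      then have "(\<mu> * y) mod p \<in> (\<lambda>a. (a + g) mod p) ` A" using eq by blast
      then obtain x where x: "x \<in> A" "(\<mu> * y) mod p = (x + g) mod p" by auto
      have "z = (\<nu> * x) mod p" using key[OF x(2)] y(2) by simp
      then show "z \<in> (\<lambda>a. (\<nu> * a) mod p) ` A" using x(1) by blast
    qed
  qed
  then show ?thesis using nu(1,2) g' unfolding multipliers_def \<nu>_def by blast
qed

lemma finv_fix: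
  assumes "prime p" "\<mu> \<in> Fp p" "\<mu> \<noteq> 0" "finv p \<mu> = \<mu>"
  shows "\<mu> = 1 \<or> \<mu> = p - 1"
proof -
  have p1: "p > 1" using assms(1) prime_gt_1_int by blast
  have "(\<mu> * \<mu>) mod p = 1" using finv(2)[OF assms(1-3)] assms(4) by simp
  then have "(\<mu> * \<mu>) mod p = 1 mod p" using p1 by simp
  then have "p dvd \<mu> * \<mu> - 1" using mod_eq_dvd_iff by blast
  moreover have "\<mu> * \<mu> - 1 = (\<mu> - 1) * (\<mu> + 1)" by (simp add: algebra_simps)
  ultimately have "p dvd (\<mu> - 1) * (\<mu> + 1)" by simp
  then have "p dvd \<mu> - 1 \<or> p dvd \<mu> + 1" using prime_dvd_mult_iff[OF assms(1)] by blast
  moreover have "1 \<in> Fp p" "p - 1 \<in> Fp p" using p1 unfolding Fp_def by auto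
  moreover have "\<mu> + 1 - p = \<mu> - (p - 1)" by simp
  ultimately show ?thesis
  proof (elim disjE conjE)
    assume "p dvd \<mu> - 1" "1 \<in> Fp p"
    then show ?thesis using Fp_eq[OF assms(2)] by blast
  next
    assume a: "p dvd \<mu> + 1" "p - 1 \<in> Fp p" "\<mu> + 1 - p = \<mu> - (p - 1)"
    then have "p dvd \<mu> + 1 - p" using dvd_diff dvd_refl by blast
    then have "p dvd \<mu> - (p - 1)" using a(3) by simp
    then show ?thesis using Fp_eq[OF assms(2) a(2)] by blast
  qed
qed

theorem lemma1:
  fixes p :: int and A :: "int set"
  assumes "prime p" and "p > 5"
    and "A \<subseteq> Fp p"
    and "diff_exact p A (QR p)"
  shows "odd (card (multipliers p A)) \<and> (p - 1) \<notin> multipliers p A"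
proof
  let ?M = "multipliers p A"
  have n1: "(p - 1) \<notin> ?M" using neg1_not[OF assms] .
  then show "(p - 1) \<notin> ?M" .
  have p1: "p > 1" using assms(2) by simp
  have fin: "finite ?M"
    by (rule finite_subset[of _ "Fp p"]) (auto simp: multipliers_def Fp_def)
  have one: "1 \<in> ?M"
  proof -
    have "(\<lambda>a. (1 * a) mod p) ` A = (\<lambda>a. (a + 0) mod p) ` A" by simp
    moreover have "(0::int) \<in> Fp p" "(1::int) \<in> Fp p" using p1 unfolding Fp_def by auto
    ultimately show ?thesis unfolding multipliers_def mem_Collect_eq
      by (intro conjI bexI[of _ 0]) auto
  qed
  have Mfp: "\<mu> \<in> Fp p" "\<mu> \<noteq> 0" if "\<mu> \<in> ?M" for \<mu> using that unfolding multipliers_def by auto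
  have f1: "finv p 1 = 1"
  proof -
    have "(1::int) \<in> Fp p" using p1 unfolding Fp_def by auto
    then have "finv p 1 \<in> Fp p" "(1 * finv p 1) mod p = 1" using finv(1,2)[OF assms(1) \<open>1 \<in> Fp p\<close>] by auto
    then show ?thesis using Fp_mod by force
  qed
  have "even (card (?M - {1}))"
  proof (rule even_card_inv[where f = "finv p"])
    show "finite (?M - {1})" using fin by simp
    show "\<forall>x\<in>?M - {1}. finv p x \<in> ?M - {1} \<and> finv p (finv p x) = x \<and> finv p x \<noteq> x"
    proof
      fix x assume x: "x \<in> ?M - {1}"
      have ff: "finv p (finv p x) = x" using finv(4)[OF assms(1) Mfp[of x]] x by simp
      have "finv p x \<noteq> 1" using ff f1 x by auto
      moreover have "finv p x \<noteq> x" using finv_fix[OF assms(1) Mfp[of x]] x n1 by auto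
      ultimately show "finv p x \<in> ?M - {1} \<and> finv p (finv p x) = x \<and> finv p x \<noteq> x"
        using finv_mult[OF assms(1)] x ff by auto
    qed
  qed
  moreover have "card ?M = card (?M - {1}) + 1"
  proof -
    have "card ?M > 0" using fin one card_gt_0_iff by blast
    moreover have "card (?M - {1}) = card ?M - 1" using card_Diff_singleton[OF one] .
    ultimately show ?thesis by linarith
  qed
  ultimately show "odd (card ?M)" by simp
qed

end
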